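(* Let $A,B$ be commutative rings, $f:A\to B$ a ring homomorphism, $J$ an ideal of $B$, $\mathfrak a$ an ideal of $A$, $\mathfrak p$ a prime ideal of $A$ and $\mathfrak q$ a prime ideal of $B$. Then (1) $\mathfrak a^e\subseteq\mathfrak p^{\prime_f}$ if and only if $\mathfrak a\subseteq\mathfrak p$; (2) $\mathfrak a^e\subseteq\overline{\mathfrak q}^f$ if and only if $f(\mathfrak a)\subseteq\mathfrak q$.
   Context: $A\bowtie^fJ=\{(a,f(a)+j): a\in A,\ j\in J\}\subseteq A\times B$; $\iota_A(x)=(x,f(x))$ and $\mathfrak a^e=\iota_A(\mathfrak a)(A\bowtie^fJ)$. For a prime $\mathfrak p$ of $A$, $\mathfrak p^{\prime_f}=\{(p,f(p)+j): p\in\mathfrak p,\ j\in J\}$; for a prime $\mathfrak q$ of $B$, $\overline{\mathfrak q}^f=\{(a,f(a)+j): a\in A,\ j\in J,\ f(a)+j\in\mathfrak q\}$. *)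

theory Defs
  imports "HOL-Algebra.Algebra"
begin

definition amalg :: "('a, 'm) ring_scheme \<Rightarrow> ('b, 'n) ring_scheme \<Rightarrow> ('a \<Rightarrow> 'b) \<Rightarrow> 'b set
                      \<Rightarrow> ('a \<times> 'b) ring" where
  "amalg A B f J =
     \<lparr> carrier = {(a, f a \<oplus>\<^bsub>B\<^esub> j) | a j. a \<in> carrier A \<and> j \<in> J},
       monoid.mult = (\<lambda>x y. (fst x \<otimes>\<^bsub>A\<^esub> fst y, snd x \<otimes>\<^bsub>B\<^esub> snd y)),
       monoid.one = (\<one>\<^bsub>A\<^esub>, \<one>\<^bsub>B\<^esub>),
       ring.zero = (\<zero>\<^bsub>A\<^esub>, \<zero>\<^bsub>B\<^esub>),
       ring.add = (\<lambda>x y. (fst x \<oplus>\<^bsub>A\<^esub> fst y, snd x \<oplus>\<^bsub>B\<^esub> snd y)) \<rparr>"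

definition iotaA :: "('a \<Rightarrow> 'b) \<Rightarrow> 'a \<Rightarrow> 'a \<times> 'b" where
  "iotaA f x = (x, f x)"

text \<open>Extension a^e = \<iota>_A(a)(A \<bowtie>^f J): the ideal of A \<bowtie>^f J generated by \<iota>_A(a).\<close>
definition ext_ideal :: "('a, 'm) ring_scheme \<Rightarrow> ('b, 'n) ring_scheme \<Rightarrow> ('a \<Rightarrow> 'b) \<Rightarrow> 'b set
                         \<Rightarrow> 'a set \<Rightarrow> ('a \<times> 'b) set" where
  "ext_ideal A B f J I = genideal (amalg A B f J) (iotaA f ` I)"

definition prime_prime_f :: "('a, 'm) ring_scheme \<Rightarrow> ('b, 'n) ring_scheme \<Rightarrow> ('a \<Rightarrow> 'b) \<Rightarrow> 'b set
                         \<Rightarrow> 'a set \<Rightarrow> ('a \<times> 'b) set" where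
  "prime_prime_f A B f J P = {(p, f p \<oplus>\<^bsub>B\<^esub> j) | p j. p \<in> P \<and> j \<in> J}"

definition prime_bar_f :: "('a, 'm) ring_scheme \<Rightarrow> ('b, 'n) ring_scheme \<Rightarrow> ('a \<Rightarrow> 'b) \<Rightarrow> 'b set
                         \<Rightarrow> 'b set \<Rightarrow> ('a \<times> 'b) set" where
  "prime_bar_f A B f J Q =
     {(a, f a \<oplus>\<^bsub>B\<^esub> j) | a j. a \<in> carrier A \<and> j \<in> J \<and> f a \<oplus>\<^bsub>B\<^esub> j \<in> Q}"

end

theory Submission
  imports Defs
begin

locale amal = ring_hom_cring +
  fixes J
  assumes J: "ideal J S"
begin

abbreviation "T \<equiv> amalg R S h J"

lemma Jc: "j \<in> J \<Longrightarrow> j \<in> carrier S"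
  by (rule ideal.Icarr[OF J])

lemma carr: "x \<in> carrier T \<longleftrightarrow> (\<exists>a j. x = (a, h a \<oplus>\<^bsub>S\<^esub> j) \<and> a \<in> carrier R \<and> j \<in> J)"
  by (auto simp: amalg_def)

lemma ops: "x \<oplus>\<^bsub>T\<^esub> y = (fst x \<oplus>\<^bsub>R\<^esub> fst y, snd x \<oplus>\<^bsub>S\<^esub> snd y)"
  "x \<otimes>\<^bsub>T\<^esub> y = (fst x \<otimes>\<^bsub>R\<^esub> fst y, snd x \<otimes>\<^bsub>S\<^esub> snd y)"
  "\<one>\<^bsub>T\<^esub> = (\<one>\<^bsub>R\<^esub>, \<one>\<^bsub>S\<^esub>)" "\<zero>\<^bsub>T\<^esub> = (\<zero>\<^bsub>R\<^esub>, \<zero>\<^bsub>S\<^esub>)"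
  by (auto simp: amalg_def)

lemma carrI: "a \<in> carrier R \<Longrightarrow> j \<in> J \<Longrightarrow> (a, h a \<oplus>\<^bsub>S\<^esub> j) \<in> carrier T"
  by (auto simp: amalg_def)

lemma carrD: "x \<in> carrier T \<Longrightarrow> fst x \<in> carrier R \<and> snd x \<in> carrier S"
  by (auto simp: carr Jc)

lemma Jadd: "j \<in> J \<Longrightarrow> k \<in> J \<Longrightarrow> j \<oplus>\<^bsub>S\<^esub> k \<in> J"
  using J by (simp add: ideal.axioms additive_subgroup.a_closed)
lemma Jneg: "j \<in> J \<Longrightarrow> \<ominus>\<^bsub>S\<^esub> j \<in> J"
  using J by (simp add: ideal.axioms additive_subgroup.a_inv_closed)
lemma Jzero: "\<zero>\<^bsub>S\<^esub> \<in> J"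
  using J by (simp add: additive_subgroup.zero_closed ideal.axioms(1))
lemma Jstuff: "a \<in> carrier R \<Longrightarrow> b \<in> carrier R \<Longrightarrow> j \<in> J \<Longrightarrow> k \<in> J \<Longrightarrow>
   h a \<otimes>\<^bsub>S\<^esub> k \<oplus>\<^bsub>S\<^esub> j \<otimes>\<^bsub>S\<^esub> (h b \<oplus>\<^bsub>S\<^esub> k) \<in> J"
proof -
  assume a: "a \<in> carrier R" "b \<in> carrier R" "j \<in> J" "k \<in> J"
  have c1: "h a \<in> carrier S" using a(1) by simp
  have c2: "h b \<oplus>\<^bsub>S\<^esub> k \<in> carrier S" using a(2) Jc[OF a(4)] by simp
  note ideal.I_l_closed[OF J a(4) c1]
  moreover note ideal.I_r_closed[OF J a(3) c2]
  ultimately show ?thesis by (rule Jadd)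
qed

lemma add_closed: "x \<in> carrier T \<Longrightarrow> y \<in> carrier T \<Longrightarrow> x \<oplus>\<^bsub>T\<^esub> y \<in> carrier T"
proof -
  assume "x \<in> carrier T" "y \<in> carrier T"
  then obtain a j b k where x: "x = (a, h a \<oplus>\<^bsub>S\<^esub> j)" "a \<in> carrier R" "j \<in> J"
    and y: "y = (b, h b \<oplus>\<^bsub>S\<^esub> k)" "b \<in> carrier R" "k \<in> J" by (auto simp: carr)
  have eq: "x \<oplus>\<^bsub>T\<^esub> y = (a \<oplus>\<^bsub>R\<^esub> b, h (a \<oplus>\<^bsub>R\<^esub> b) \<oplus>\<^bsub>S\<^esub> (j \<oplus>\<^bsub>S\<^esub> k))"
    using x y Jc[of j] Jc[of k] by (simp add: ops S.a_ac)
  have mem: "j \<oplus>\<^bsub>S\<^esub> k \<in> J" using J x y by (simp add: ideal.axioms additive_subgroup.a_closed)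
  have cc: "a \<oplus>\<^bsub>R\<^esub> b \<in> carrier R" using x y by simp
  show ?thesis unfolding eq using cc mem by (rule carrI)
qed

lemma mult_closed: "x \<in> carrier T \<Longrightarrow> y \<in> carrier T \<Longrightarrow> x \<otimes>\<^bsub>T\<^esub> y \<in> carrier T"
proof -
  assume "x \<in> carrier T" "y \<in> carrier T"
  then obtain a j b k where x: "x = (a, h a \<oplus>\<^bsub>S\<^esub> j)" "a \<in> carrier R" "j \<in> J"
    and y: "y = (b, h b \<oplus>\<^bsub>S\<^esub> k)" "b \<in> carrier R" "k \<in> J" by (auto simp: carr)
  have jc: "j \<in> carrier S" "k \<in> carrier S" using x y Jc by auto
  have eq: "x \<otimes>\<^bsub>T\<^esub> y = (a \<otimes>\<^bsub>R\<^esub> b, h (a \<otimes>\<^bsub>R\<^esub> b) \<oplus>\<^bsub>S\<^esub> (h a \<otimes>\<^bsub>S\<^esub> k \<oplus>\<^bsub>S\<^esub> j \<otimes>\<^bsub>S\<^esub> (h b \<oplus>\<^bsub>S\<^esub> k)))"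
  proof -
    have "(h a \<oplus>\<^bsub>S\<^esub> j) \<otimes>\<^bsub>S\<^esub> (h b \<oplus>\<^bsub>S\<^esub> k) = h a \<otimes>\<^bsub>S\<^esub> (h b \<oplus>\<^bsub>S\<^esub> k) \<oplus>\<^bsub>S\<^esub> j \<otimes>\<^bsub>S\<^esub> (h b \<oplus>\<^bsub>S\<^esub> k)"
      using x y jc by (intro S.l_distr) auto
    also have "\<dots> = (h a \<otimes>\<^bsub>S\<^esub> h b \<oplus>\<^bsub>S\<^esub> h a \<otimes>\<^bsub>S\<^esub> k) \<oplus>\<^bsub>S\<^esub> j \<otimes>\<^bsub>S\<^esub> (h b \<oplus>\<^bsub>S\<^esub> k)"
      using x y jc by (subst S.r_distr) auto
    also have "\<dots> = h (a \<otimes>\<^bsub>R\<^esub> b) \<oplus>\<^bsub>S\<^esub> (h a \<otimes>\<^bsub>S\<^esub> k \<oplus>\<^bsub>S\<^esub> j \<otimes>\<^bsub>S\<^esub> (h b \<oplus>\<^bsub>S\<^esub> k))"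
      using x y jc by (simp add: S.a_assoc)
    finally show ?thesis using x y by (simp add: ops)
  qed
  have mem: "h a \<otimes>\<^bsub>S\<^esub> k \<oplus>\<^bsub>S\<^esub> j \<otimes>\<^bsub>S\<^esub> (h b \<oplus>\<^bsub>S\<^esub> k) \<in> J"
    using x y by (intro Jstuff)
  have cc: "a \<otimes>\<^bsub>R\<^esub> b \<in> carrier R" using x y by simp
  show ?thesis unfolding eq using cc mem by (rule carrI)
qed

lemma zero_in: "\<zero>\<^bsub>T\<^esub> \<in> carrier T"
  unfolding carr ops using J by (intro exI[of _ "\<zero>\<^bsub>R\<^esub>"] exI[of _ "\<zero>\<^bsub>S\<^esub>"])
    (simp add: additive_subgroup.zero_closed ideal.axioms(1))

lemma one_in: "\<one>\<^bsub>T\<^esub> \<in> carrier T"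
  unfolding carr ops using J by (intro exI[of _ "\<one>\<^bsub>R\<^esub>"] exI[of _ "\<zero>\<^bsub>S\<^esub>"])
    (simp add: additive_subgroup.zero_closed ideal.axioms(1))

lemma neg_in: "x \<in> carrier T \<Longrightarrow> (\<ominus>\<^bsub>R\<^esub> fst x, \<ominus>\<^bsub>S\<^esub> snd x) \<in> carrier T"
proof -
  assume "x \<in> carrier T"
  then obtain a j where x: "x = (a, h a \<oplus>\<^bsub>S\<^esub> j)" "a \<in> carrier R" "j \<in> J" by (auto simp: carr)
  have e: "\<ominus>\<^bsub>S\<^esub> (h a \<oplus>\<^bsub>S\<^esub> j) = h (\<ominus>\<^bsub>R\<^esub> a) \<oplus>\<^bsub>S\<^esub> \<ominus>\<^bsub>S\<^esub> j"
    using x Jc[of j] by (simp add: S.minus_add)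
  have mem: "\<ominus>\<^bsub>S\<^esub> j \<in> J" using J x by (simp add: ideal.axioms additive_subgroup.a_inv_closed)
  have cc: "\<ominus>\<^bsub>R\<^esub> a \<in> carrier R" using x by simp
  show ?thesis unfolding x(1) fst_conv snd_conv e using cc mem by (rule carrI)
qed

lemma ringT: "ring T"
proof (rule ringI)
  show "abelian_group T"
  proof (rule abelian_groupI)
    fix x assume x: "x \<in> carrier T"
    show "\<exists>y\<in>carrier T. y \<oplus>\<^bsub>T\<^esub> x = \<zero>\<^bsub>T\<^esub>"
      using neg_in[OF x] carrD[OF x] by (intro bexI[of _ "(\<ominus>\<^bsub>R\<^esub> fst x, \<ominus>\<^bsub>S\<^esub> snd x)"]) (auto simp: ops R.l_neg S.l_neg)
  next
    fix x y assume "x \<in> carrier T" "y \<in> carrier T"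
    then show "x \<oplus>\<^bsub>T\<^esub> y \<in> carrier T" by (rule add_closed)
  next
    show "\<zero>\<^bsub>T\<^esub> \<in> carrier T" by (rule zero_in)
  next
    fix x y z assume "x \<in> carrier T" "y \<in> carrier T" "z \<in> carrier T"
    then show "x \<oplus>\<^bsub>T\<^esub> y \<oplus>\<^bsub>T\<^esub> z = x \<oplus>\<^bsub>T\<^esub> (y \<oplus>\<^bsub>T\<^esub> z)"
      by (auto simp: ops R.a_assoc S.a_assoc dest!: carrD)
  next
    fix x y assume "x \<in> carrier T" "y \<in> carrier T"
    then show "x \<oplus>\<^bsub>T\<^esub> y = y \<oplus>\<^bsub>T\<^esub> x"
      by (auto simp: ops R.a_comm S.a_comm dest!: carrD)
  next
    fix x assume "x \<in> carrier T"
    then show "\<zero>\<^bsub>T\<^esub> \<oplus>\<^bsub>T\<^esub> x = x"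
      by (auto simp: ops dest!: carrD)
  qed
  show "monoid T"
  proof (rule monoidI)
    fix x y assume "x \<in> carrier T" "y \<in> carrier T"
    then show "x \<otimes>\<^bsub>T\<^esub> y \<in> carrier T" by (rule mult_closed)
  next
    show "\<one>\<^bsub>T\<^esub> \<in> carrier T" by (rule one_in)
  next
    fix x y z assume "x \<in> carrier T" "y \<in> carrier T" "z \<in> carrier T"
    then show "x \<otimes>\<^bsub>T\<^esub> y \<otimes>\<^bsub>T\<^esub> z = x \<otimes>\<^bsub>T\<^esub> (y \<otimes>\<^bsub>T\<^esub> z)"
      by (auto simp: ops R.m_assoc S.m_assoc dest!: carrD)
  next
    fix x assume "x \<in> carrier T"
    then show "\<one>\<^bsub>T\<^esub> \<otimes>\<^bsub>T\<^esub> x = x"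
      by (auto simp: ops dest!: carrD)
  next
    fix x assume "x \<in> carrier T"
    then show "x \<otimes>\<^bsub>T\<^esub> \<one>\<^bsub>T\<^esub> = x"
      by (auto simp: ops dest!: carrD)
  qed
next
  fix x y z assume "x \<in> carrier T" "y \<in> carrier T" "z \<in> carrier T"
  then show "(x \<oplus>\<^bsub>T\<^esub> y) \<otimes>\<^bsub>T\<^esub> z = x \<otimes>\<^bsub>T\<^esub> z \<oplus>\<^bsub>T\<^esub> y \<otimes>\<^bsub>T\<^esub> z"
    by (auto simp: ops R.l_distr S.l_distr dest!: carrD)
next
  fix x y z assume "x \<in> carrier T" "y \<in> carrier T" "z \<in> carrier T"
  then show "z \<otimes>\<^bsub>T\<^esub> (x \<oplus>\<^bsub>T\<^esub> y) = z \<otimes>\<^bsub>T\<^esub> x \<oplus>\<^bsub>T\<^esub> z \<otimes>\<^bsub>T\<^esub> y"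
    by (auto simp: ops R.r_distr S.r_distr dest!: carrD)
qed

lemma negT: "x \<in> carrier T \<Longrightarrow> \<ominus>\<^bsub>T\<^esub> x = (\<ominus>\<^bsub>R\<^esub> fst x, \<ominus>\<^bsub>S\<^esub> snd x)"
proof -
  assume x: "x \<in> carrier T"
  have e: "(\<ominus>\<^bsub>R\<^esub> fst x, \<ominus>\<^bsub>S\<^esub> snd x) \<oplus>\<^bsub>T\<^esub> x = \<zero>\<^bsub>T\<^esub>"
    using carrD[OF x] by (simp add: ops R.l_neg S.l_neg)
  show ?thesis
    by (rule abelian_group.minus_equality[OF ring.is_abelian_group[OF ringT] e x neg_in[OF x]])
qed

lemma add_form: "a \<in> carrier R \<Longrightarrow> b \<in> carrier R \<Longrightarrow> j \<in> carrier S \<Longrightarrow> k \<in> carrier S \<Longrightarrow>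
  (a, h a \<oplus>\<^bsub>S\<^esub> j) \<oplus>\<^bsub>T\<^esub> (b, h b \<oplus>\<^bsub>S\<^esub> k) = (a \<oplus>\<^bsub>R\<^esub> b, h (a \<oplus>\<^bsub>R\<^esub> b) \<oplus>\<^bsub>S\<^esub> (j \<oplus>\<^bsub>S\<^esub> k))"
  by (simp add: ops S.a_ac)

lemma mult_form: "a \<in> carrier R \<Longrightarrow> b \<in> carrier R \<Longrightarrow> j \<in> carrier S \<Longrightarrow> k \<in> carrier S \<Longrightarrow>
  h (a \<otimes>\<^bsub>R\<^esub> b) \<oplus>\<^bsub>S\<^esub> (h a \<otimes>\<^bsub>S\<^esub> k \<oplus>\<^bsub>S\<^esub> j \<otimes>\<^bsub>S\<^esub> (h b \<oplus>\<^bsub>S\<^esub> k)) = (h a \<oplus>\<^bsub>S\<^esub> j) \<otimes>\<^bsub>S\<^esub> (h b \<oplus>\<^bsub>S\<^esub> k)"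
proof -
  assume x: "a \<in> carrier R" "j \<in> carrier S" and y: "b \<in> carrier R" "k \<in> carrier S"
  have "(h a \<oplus>\<^bsub>S\<^esub> j) \<otimes>\<^bsub>S\<^esub> (h b \<oplus>\<^bsub>S\<^esub> k) = h a \<otimes>\<^bsub>S\<^esub> (h b \<oplus>\<^bsub>S\<^esub> k) \<oplus>\<^bsub>S\<^esub> j \<otimes>\<^bsub>S\<^esub> (h b \<oplus>\<^bsub>S\<^esub> k)"
    using x y by (intro S.l_distr) auto
  also have "\<dots> = (h a \<otimes>\<^bsub>S\<^esub> h b \<oplus>\<^bsub>S\<^esub> h a \<otimes>\<^bsub>S\<^esub> k) \<oplus>\<^bsub>S\<^esub> j \<otimes>\<^bsub>S\<^esub> (h b \<oplus>\<^bsub>S\<^esub> k)"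
    using x y by (subst S.r_distr) auto
  also have "\<dots> = h (a \<otimes>\<^bsub>R\<^esub> b) \<oplus>\<^bsub>S\<^esub> (h a \<otimes>\<^bsub>S\<^esub> k \<oplus>\<^bsub>S\<^esub> j \<otimes>\<^bsub>S\<^esub> (h b \<oplus>\<^bsub>S\<^esub> k))"
    using x y by (simp add: S.a_assoc)
  finally show ?thesis by simp
qed

lemma idealT:
  assumes "I \<subseteq> carrier T" "\<zero>\<^bsub>T\<^esub> \<in> I"
    "\<And>x y. x \<in> I \<Longrightarrow> y \<in> I \<Longrightarrow> x \<oplus>\<^bsub>T\<^esub> y \<in> I"
    "\<And>x. x \<in> I \<Longrightarrow> (\<ominus>\<^bsub>R\<^esub> fst x, \<ominus>\<^bsub>S\<^esub> snd x) \<in> I"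
    "\<And>x y. x \<in> I \<Longrightarrow> y \<in> carrier T \<Longrightarrow> y \<otimes>\<^bsub>T\<^esub> x \<in> I"
  shows "ideal I T"
proof -
  interpret T: ring T by (rule ringT)
  have comm: "x \<otimes>\<^bsub>T\<^esub> y = y \<otimes>\<^bsub>T\<^esub> x" if "x \<in> carrier T" "y \<in> carrier T" for x y
    using carrD[OF that(1)] carrD[OF that(2)] by (simp add: ops R.m_comm S.m_comm)
  show ?thesis
  proof (rule idealI[OF ringT])
    show "subgroup I (add_monoid T)"
    proof (rule T.add.subgroupI)
      fix a assume a: "a \<in> I"
      have "a \<in> carrier T" using a assms(1) by auto
      then have "\<ominus>\<^bsub>T\<^esub> a = (\<ominus>\<^bsub>R\<^esub> fst a, \<ominus>\<^bsub>S\<^esub> snd a)" by (rule negT)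
      then show "\<ominus>\<^bsub>T\<^esub> a \<in> I" using assms(4)[OF a] by simp
    qed (use assms in auto)
  next
    fix a x assume "a \<in> I" "x \<in> carrier T"
    then show "x \<otimes>\<^bsub>T\<^esub> a \<in> I" by (rule assms(5))
  next
    fix a x assume ax: "a \<in> I" "x \<in> carrier T"
    have eq: "a \<otimes>\<^bsub>T\<^esub> x = x \<otimes>\<^bsub>T\<^esub> a" using ax assms(1) by (intro comm) auto
    show "a \<otimes>\<^bsub>T\<^esub> x \<in> I" unfolding eq using ax by (rule assms(5))
  qed
qed

lemma ideal_pp:
  assumes P: "ideal P R"
  shows "ideal (prime_prime_f R S h J P) T"
proof -
  have Pc: "P \<subseteq> carrier R" using ideal.Icarr[OF P] by blast
  have pp: "(p, h p \<oplus>\<^bsub>S\<^esub> j) \<in> prime_prime_f R S h J P" if "p \<in> P" "j \<in> J" for p j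
    using that unfolding prime_prime_f_def by blast
  show ?thesis
  proof (rule idealT)
    show "prime_prime_f R S h J P \<subseteq> carrier T"
      using Pc unfolding prime_prime_f_def by (auto intro!: carrI)
  next
    have z: "\<zero>\<^bsub>R\<^esub> \<in> P" using P by (simp add: additive_subgroup.zero_closed ideal.axioms(1))
    have "\<zero>\<^bsub>T\<^esub> = (\<zero>\<^bsub>R\<^esub>, h \<zero>\<^bsub>R\<^esub> \<oplus>\<^bsub>S\<^esub> \<zero>\<^bsub>S\<^esub>)" by (simp add: ops)
    then show "\<zero>\<^bsub>T\<^esub> \<in> prime_prime_f R S h J P"
      using pp[OF z Jzero] by simp
  next
    fix x y assume "x \<in> prime_prime_f R S h J P" "y \<in> prime_prime_f R S h J P"
    then obtain a j b k where x: "x = (a, h a \<oplus>\<^bsub>S\<^esub> j)" "a \<in> P" "j \<in> J"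
      and y: "y = (b, h b \<oplus>\<^bsub>S\<^esub> k)" "b \<in> P" "k \<in> J" unfolding prime_prime_f_def by blast
    have ac: "a \<in> carrier R" "b \<in> carrier R" using Pc x y by auto
    have ab: "a \<oplus>\<^bsub>R\<^esub> b \<in> P" using P x y by (simp add: ideal.axioms additive_subgroup.a_closed)
    have eq: "x \<oplus>\<^bsub>T\<^esub> y = (a \<oplus>\<^bsub>R\<^esub> b, h (a \<oplus>\<^bsub>R\<^esub> b) \<oplus>\<^bsub>S\<^esub> (j \<oplus>\<^bsub>S\<^esub> k))"
      unfolding x(1) y(1) using ac Jc[OF x(3)] Jc[OF y(3)] by (rule add_form)
    show "x \<oplus>\<^bsub>T\<^esub> y \<in> prime_prime_f R S h J P"
      unfolding eq using ab Jadd[OF x(3) y(3)] by (rule pp)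
  next
    fix x assume "x \<in> prime_prime_f R S h J P"
    then obtain a j where x: "x = (a, h a \<oplus>\<^bsub>S\<^esub> j)" "a \<in> P" "j \<in> J"
      unfolding prime_prime_f_def by blast
    have na: "\<ominus>\<^bsub>R\<^esub> a \<in> P" using P x by (simp add: ideal.axioms additive_subgroup.a_inv_closed)
    have e: "\<ominus>\<^bsub>S\<^esub> (h a \<oplus>\<^bsub>S\<^esub> j) = h (\<ominus>\<^bsub>R\<^esub> a) \<oplus>\<^bsub>S\<^esub> \<ominus>\<^bsub>S\<^esub> j"
      using x Pc Jc[of j] by (auto simp add: S.minus_add)
    show "(\<ominus>\<^bsub>R\<^esub> fst x, \<ominus>\<^bsub>S\<^esub> snd x) \<in> prime_prime_f R S h J P"
      unfolding x(1) fst_conv snd_conv e using na Jneg[OF x(3)] by (rule pp)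
  next
    fix x y assume "x \<in> prime_prime_f R S h J P" "y \<in> carrier T"
    then obtain a j b k where x: "x = (a, h a \<oplus>\<^bsub>S\<^esub> j)" "a \<in> P" "j \<in> J"
      and y: "y = (b, h b \<oplus>\<^bsub>S\<^esub> k)" "b \<in> carrier R" "k \<in> J" unfolding prime_prime_f_def carr by blast
    have ac: "a \<in> carrier R" using x Pc by auto
    have ba: "b \<otimes>\<^bsub>R\<^esub> a \<in> P" using P x y by (simp add: ideal.I_l_closed)
    have eq: "y \<otimes>\<^bsub>T\<^esub> x = (b \<otimes>\<^bsub>R\<^esub> a, h (b \<otimes>\<^bsub>R\<^esub> a) \<oplus>\<^bsub>S\<^esub> (h b \<otimes>\<^bsub>S\<^esub> j \<oplus>\<^bsub>S\<^esub> k \<otimes>\<^bsub>S\<^esub> (h a \<oplus>\<^bsub>S\<^esub> j)))"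
      unfolding x(1) y(1) ops fst_conv snd_conv mult_form[OF y(2) ac Jc[OF y(3)] Jc[OF x(3)]] ..
    show "y \<otimes>\<^bsub>T\<^esub> x \<in> prime_prime_f R S h J P"
      unfolding eq using ba Jstuff[OF y(2) ac y(3) x(3)] by (rule pp)
  qed
qed

lemma ideal_pb:
  assumes Q: "ideal Q S"
  shows "ideal (prime_bar_f R S h J Q) T"
proof -
  have pb: "(p, h p \<oplus>\<^bsub>S\<^esub> j) \<in> prime_bar_f R S h J Q" if "p \<in> carrier R" "j \<in> J" "h p \<oplus>\<^bsub>S\<^esub> j \<in> Q" for p j
    using that unfolding prime_bar_f_def by blast
  show ?thesis
  proof (rule idealT)
    show "prime_bar_f R S h J Q \<subseteq> carrier T"
      unfolding prime_bar_f_def by (auto intro!: carrI)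
  next
    have z: "h \<zero>\<^bsub>R\<^esub> \<oplus>\<^bsub>S\<^esub> \<zero>\<^bsub>S\<^esub> \<in> Q" using Q by (simp add: additive_subgroup.zero_closed ideal.axioms(1))
    have "\<zero>\<^bsub>T\<^esub> = (\<zero>\<^bsub>R\<^esub>, h \<zero>\<^bsub>R\<^esub> \<oplus>\<^bsub>S\<^esub> \<zero>\<^bsub>S\<^esub>)" by (simp add: ops)
    then show "\<zero>\<^bsub>T\<^esub> \<in> prime_bar_f R S h J Q"
      using pb[OF R.zero_closed Jzero z] by simp
  next
    fix x y assume "x \<in> prime_bar_f R S h J Q" "y \<in> prime_bar_f R S h J Q"
    then obtain a j b k where x: "x = (a, h a \<oplus>\<^bsub>S\<^esub> j)" "a \<in> carrier R" "j \<in> J" "h a \<oplus>\<^bsub>S\<^esub> j \<in> Q"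
      and y: "y = (b, h b \<oplus>\<^bsub>S\<^esub> k)" "b \<in> carrier R" "k \<in> J" "h b \<oplus>\<^bsub>S\<^esub> k \<in> Q"
      unfolding prime_bar_f_def by blast
    have q: "(h a \<oplus>\<^bsub>S\<^esub> j) \<oplus>\<^bsub>S\<^esub> (h b \<oplus>\<^bsub>S\<^esub> k) \<in> Q" using Q x y by (simp add: ideal.axioms additive_subgroup.a_closed)
    have eq1: "x \<oplus>\<^bsub>T\<^esub> y = (a \<oplus>\<^bsub>R\<^esub> b, h (a \<oplus>\<^bsub>R\<^esub> b) \<oplus>\<^bsub>S\<^esub> (j \<oplus>\<^bsub>S\<^esub> k))"
      unfolding x(1) y(1) using x(2) y(2) Jc[OF x(3)] Jc[OF y(3)] by (rule add_form)
    have eq2: "x \<oplus>\<^bsub>T\<^esub> y = (a \<oplus>\<^bsub>R\<^esub> b, (h a \<oplus>\<^bsub>S\<^esub> j) \<oplus>\<^bsub>S\<^esub> (h b \<oplus>\<^bsub>S\<^esub> k))"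
      unfolding x(1) y(1) ops by simp
    have q': "h (a \<oplus>\<^bsub>R\<^esub> b) \<oplus>\<^bsub>S\<^esub> (j \<oplus>\<^bsub>S\<^esub> k) \<in> Q" using q eq1 eq2 by simp
    show "x \<oplus>\<^bsub>T\<^esub> y \<in> prime_bar_f R S h J Q"
      unfolding eq1 using R.add.m_closed[OF x(2) y(2)] Jadd[OF x(3) y(3)] q' by (rule pb)
  next
    fix x assume "x \<in> prime_bar_f R S h J Q"
    then obtain a j where x: "x = (a, h a \<oplus>\<^bsub>S\<^esub> j)" "a \<in> carrier R" "j \<in> J" "h a \<oplus>\<^bsub>S\<^esub> j \<in> Q"
      unfolding prime_bar_f_def by blast
    have q: "\<ominus>\<^bsub>S\<^esub> (h a \<oplus>\<^bsub>S\<^esub> j) \<in> Q" using Q x by (simp add: ideal.axioms additive_subgroup.a_inv_closed)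
    have e: "\<ominus>\<^bsub>S\<^esub> (h a \<oplus>\<^bsub>S\<^esub> j) = h (\<ominus>\<^bsub>R\<^esub> a) \<oplus>\<^bsub>S\<^esub> \<ominus>\<^bsub>S\<^esub> j"
      using x Jc[of j] by (auto simp add: S.minus_add)
    show "(\<ominus>\<^bsub>R\<^esub> fst x, \<ominus>\<^bsub>S\<^esub> snd x) \<in> prime_bar_f R S h J Q"
      unfolding x(1) fst_conv snd_conv e using R.a_inv_closed[OF x(2)] Jneg[OF x(3)] q[unfolded e] by (rule pb)
  next
    fix x y assume "x \<in> prime_bar_f R S h J Q" "y \<in> carrier T"
    then obtain a j b k where x: "x = (a, h a \<oplus>\<^bsub>S\<^esub> j)" "a \<in> carrier R" "j \<in> J" "h a \<oplus>\<^bsub>S\<^esub> j \<in> Q"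
      and y: "y = (b, h b \<oplus>\<^bsub>S\<^esub> k)" "b \<in> carrier R" "k \<in> J" unfolding prime_bar_f_def carr by blast
    have q: "(h b \<oplus>\<^bsub>S\<^esub> k) \<otimes>\<^bsub>S\<^esub> (h a \<oplus>\<^bsub>S\<^esub> j) \<in> Q"
      using y(2) Jc[OF y(3)] by (intro ideal.I_l_closed[OF Q x(4)]) simp
    have mf: "h (b \<otimes>\<^bsub>R\<^esub> a) \<oplus>\<^bsub>S\<^esub> (h b \<otimes>\<^bsub>S\<^esub> j \<oplus>\<^bsub>S\<^esub> k \<otimes>\<^bsub>S\<^esub> (h a \<oplus>\<^bsub>S\<^esub> j)) = (h b \<oplus>\<^bsub>S\<^esub> k) \<otimes>\<^bsub>S\<^esub> (h a \<oplus>\<^bsub>S\<^esub> j)"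
      by (rule mult_form[OF y(2) x(2) Jc[OF y(3)] Jc[OF x(3)]])
    have eq: "y \<otimes>\<^bsub>T\<^esub> x = (b \<otimes>\<^bsub>R\<^esub> a, h (b \<otimes>\<^bsub>R\<^esub> a) \<oplus>\<^bsub>S\<^esub> (h b \<otimes>\<^bsub>S\<^esub> j \<oplus>\<^bsub>S\<^esub> k \<otimes>\<^bsub>S\<^esub> (h a \<oplus>\<^bsub>S\<^esub> j)))"
      unfolding x(1) y(1) ops fst_conv snd_conv mf ..
    show "y \<otimes>\<^bsub>T\<^esub> x \<in> prime_bar_f R S h J Q"
      unfolding eq using R.m_closed[OF y(2) x(2)] Jstuff[OF y(2) x(2) y(3) x(3)] q[folded mf] by (rule pb)
  qed
qed

end

theorem lemma4p3:
  fixes A :: "('a, 'm) ring_scheme" and B :: "('b, 'n) ring_scheme"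
  assumes "cring A" and "cring B"
    and "f \<in> ring_hom A B"
    and "ideal J B"
    and "ideal \<aa> A"
    and "primeideal P A"
    and "primeideal Q B"
  shows "(ext_ideal A B f J \<aa> \<subseteq> prime_prime_f A B f J P \<longleftrightarrow> \<aa> \<subseteq> P)
       \<and> (ext_ideal A B f J \<aa> \<subseteq> prime_bar_f A B f J Q \<longleftrightarrow> f ` \<aa> \<subseteq> Q)"
proof -
  interpret amal A B f J
    using assms by (simp add: amal_def amal_axioms_def ring_hom_cring_def ring_hom_cring_axioms_def)
  have gen: "ext_ideal A B f J \<aa> \<subseteq> I" if "ideal I (amalg A B f J)" "iotaA f ` \<aa> \<subseteq> I" for I
    using that unfolding ext_ideal_def genideal_def by blast
  have self: "iotaA f ` \<aa> \<subseteq> ext_ideal A B f J \<aa>"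
    unfolding ext_ideal_def genideal_def by blast
  have aA: "\<aa> \<subseteq> carrier A" using ideal.Icarr[OF assms(5)] by blast
  have Pi: "ideal P A" and Qi: "ideal Q B" using assms(6,7) primeideal.axioms(1) by blast+
  have io: "iotaA f x = (x, f x \<oplus>\<^bsub>B\<^esub> \<zero>\<^bsub>B\<^esub>)" if "x \<in> \<aa>" for x
    using that aA by (auto simp: iotaA_def)
  have 1: "ext_ideal A B f J \<aa> \<subseteq> prime_prime_f A B f J P \<longleftrightarrow> \<aa> \<subseteq> P"
  proof
    assume H: "ext_ideal A B f J \<aa> \<subseteq> prime_prime_f A B f J P"
    show "\<aa> \<subseteq> P"
    proof
      fix x assume "x \<in> \<aa>"
      then have "iotaA f x \<in> prime_prime_f A B f J P" using H self by blast
      then show "x \<in> P" by (auto simp: iotaA_def prime_prime_f_def)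
    qed
  next
    assume H: "\<aa> \<subseteq> P"
    have "iotaA f ` \<aa> \<subseteq> prime_prime_f A B f J P"
    proof
      fix y assume "y \<in> iotaA f ` \<aa>"
      then obtain x where x: "x \<in> \<aa>" "y = iotaA f x" by blast
      show "y \<in> prime_prime_f A B f J P" unfolding x(2) io[OF x(1)] prime_prime_f_def
        using H x(1) Jzero by blast
    qed
    then show "ext_ideal A B f J \<aa> \<subseteq> prime_prime_f A B f J P"
      by (rule gen[OF ideal_pp[OF Pi]])
  qed
  have 2: "ext_ideal A B f J \<aa> \<subseteq> prime_bar_f A B f J Q \<longleftrightarrow> f ` \<aa> \<subseteq> Q"
  proof
    assume H: "ext_ideal A B f J \<aa> \<subseteq> prime_bar_f A B f J Q"
    show "f ` \<aa> \<subseteq> Q"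
    proof
      fix y assume "y \<in> f ` \<aa>"
      then obtain x where x: "x \<in> \<aa>" "y = f x" by blast
      then have "iotaA f x \<in> prime_bar_f A B f J Q" using H self by blast
      then show "y \<in> Q" using x by (auto simp: iotaA_def prime_bar_f_def)
    qed
  next
    assume H: "f ` \<aa> \<subseteq> Q"
    have "iotaA f ` \<aa> \<subseteq> prime_bar_f A B f J Q"
    proof
      fix y assume "y \<in> iotaA f ` \<aa>"
      then obtain x where x: "x \<in> \<aa>" "y = iotaA f x" by blast
      have fc: "f x \<in> carrier B" using ring_hom_closed[OF assms(3)] aA x(1) by blast
      have "f x \<in> Q" using H x(1) by blast
      then have "f x \<oplus>\<^bsub>B\<^esub> \<zero>\<^bsub>B\<^esub> \<in> Q" using fc by simp
      then show "y \<in> prime_bar_f A B f J Q" unfolding x(2) io[OF x(1)] prime_bar_f_def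
        using x(1) aA Jzero by blast
    qed
    then show "ext_ideal A B f J \<aa> \<subseteq> prime_bar_f A B f J Q"
      by (rule gen[OF ideal_pb[OF Qi]])
  qed
  show ?thesis using 1 2 by blast
qed

end
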